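(* Let $\mathbb{G}$ be the bouquet described as follows: on the boundary circle of its vertex choose $14$ points $p_0,p_1,\dots,p_{13}$ in cyclic order; $\mathbb{G}$ has three non-orientable loops with ends at $\{p_1,p_6\}$, $\{p_2,p_9\}$, $\{p_5,p_{12}\}$ and four orientable loops with ends at $\{p_0,p_3\}$, $\{p_4,p_7\}$, $\{p_8,p_{11}\}$, $\{p_{10},p_{13}\}$. Then $\mathbb{G}$ is not pseudo-orientable, and its quasi-tree generating polynomial $p_{\mathbb{G}}=\sum_Q\prod_{e\in Q}x_e$ (sum over quasi-trees $Q$) is Hurwitz stable.
   Context: A bouquet is a ribbon graph with a single vertex disc $v$ and loops attached along pairs of disjoint segments (ends) of the boundary of $v$. A loop $e$ is orientable if $v\cup e$ is an annulus and non-orientable if it is a Möbius band. A quasi-tree is a set $Q$ of loops such that $v$ together with the loops in $Q$ has exactly one boundary component. A bouquet is pseudo-orientable if its vertex boundary circle is the union of two closed arcs $S_1,S_2$ meeting in exactly two points such that both ends of each orientable loop lie in the interior of one $S_i$ and each non-orientable loop has one end in the interior of each of $S_1,S_2$. A polynomial $f\in\mathbb{C}[z_1,\dots,z_n]$ is Hurwitz stable if $f\ne0$ whenever $\mathrm{Re}(z_i)>0$ for all $i$. *)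

theory Defs
  imports Complex_Main
begin

text \<open>
Combinatorial model of a bouquet (signed chord diagram).
The vertex boundary circle carries N end segments at positions 0,...,N-1 in cyclic
order. loop_of i is the loop whose end sits at position i (each loop has exactly two
ends), ori e says whether loop e is orientable.
Each end segment i has two endpoints (i,False) (the start a_i) and (i,True)
(the end b_i) in the cyclic direction. The boundary of v together with the loops in Q
is the union of:
  - the vertex boundary arcs from b_i to a_(i+1 mod N);
  - for an end i of a loop not in Q, the end segment itself (a_i to b_i);
  - for a loop in Q with ends i, j: its two sides, joining a_i-b_j and b_i-a_j
    if the loop is orientable (annulus), and a_i-a_j and b_i-b_j if it is
    non-orientable (Moebius band).
Boundary components are the connected components of this 2-regular graph.
\<close>

definition bdry_adj ::
  "nat \<Rightarrow> (nat \<Rightarrow> 'e) \<Rightarrow> ('e \<Rightarrow> bool) \<Rightarrow> 'e set \<Rightarrow> nat \<times> bool \<Rightarrow> nat \<times> bool \<Rightarrow> bool" where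
  "bdry_adj N loop_of ori Q x y \<longleftrightarrow>
     (case x of (i, s) \<Rightarrow> case y of (j, t) \<Rightarrow>
        i < N \<and> j < N \<and>
        ((s \<and> \<not> t \<and> j = Suc i mod N) \<or>
         (\<not> s \<and> t \<and> i = Suc j mod N) \<or>
         (loop_of i \<notin> Q \<and> j = i \<and> s \<noteq> t) \<or>
         (loop_of i \<in> Q \<and> j \<noteq> i \<and> loop_of j = loop_of i \<and>
            (if ori (loop_of i) then s \<noteq> t else s = t))))"

definition bdry_points :: "nat \<Rightarrow> (nat \<times> bool) set" where
  "bdry_points N = {..<N} \<times> UNIV"

definition num_boundary_components ::
  "nat \<Rightarrow> (nat \<Rightarrow> 'e) \<Rightarrow> ('e \<Rightarrow> bool) \<Rightarrow> 'e set \<Rightarrow> nat" where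
  "num_boundary_components N loop_of ori Q =
     card (bdry_points N //
           ({(x, y). x \<in> bdry_points N \<and> y \<in> bdry_points N \<and>
                     bdry_adj N loop_of ori Q x y}\<^sup>*))"

definition loops_of :: "nat \<Rightarrow> (nat \<Rightarrow> 'e) \<Rightarrow> 'e set" where
  "loops_of N loop_of = loop_of ` {..<N}"

definition is_quasi_tree ::
  "nat \<Rightarrow> (nat \<Rightarrow> 'e) \<Rightarrow> ('e \<Rightarrow> bool) \<Rightarrow> 'e set \<Rightarrow> bool" where
  "is_quasi_tree N loop_of ori Q \<longleftrightarrow>
     Q \<subseteq> loops_of N loop_of \<and> num_boundary_components N loop_of ori Q = 1"

definition qtree_poly ::
  "nat \<Rightarrow> (nat \<Rightarrow> 'e) \<Rightarrow> ('e \<Rightarrow> bool) \<Rightarrow> ('e \<Rightarrow> complex) \<Rightarrow> complex" where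
  "qtree_poly N loop_of ori z =
     (\<Sum>Q\<in>{Q. is_quasi_tree N loop_of ori Q}. \<Prod>e\<in>Q. z e)"

definition hurwitz_stable :: "'e set \<Rightarrow> (('e \<Rightarrow> complex) \<Rightarrow> complex) \<Rightarrow> bool" where
  "hurwitz_stable V f \<longleftrightarrow> (\<forall>z. (\<forall>e\<in>V. 0 < Re (z e)) \<longrightarrow> f z \<noteq> 0)"

text \<open>Pseudo-orientable: the circle is cut at two points (lying in gaps between ends)
into closed arcs S1, S2; S1 contains exactly the ends at positions c1 < i <= c2
(possibly none, when both cut points lie in the same gap). Orientable loops have both
ends on the same arc, non-orientable loops one end on each arc.\<close>
definition pseudo_orientable ::
  "nat \<Rightarrow> (nat \<Rightarrow> 'e) \<Rightarrow> ('e \<Rightarrow> bool) \<Rightarrow> bool" where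
  "pseudo_orientable N loop_of ori \<longleftrightarrow>
     (\<exists>c1 c2. c1 \<le> c2 \<and> c2 < N \<and>
        (\<forall>i<N. \<forall>j<N. i \<noteq> j \<and> loop_of i = loop_of j \<longrightarrow>
           (ori (loop_of i) \<longleftrightarrow> ((c1 < i \<and> i \<le> c2) \<longleftrightarrow> (c1 < j \<and> j \<le> c2)))))"

text \<open>The bouquet G: 14 positions p0..p13; loops 0,1,2 are non-orientable with ends
{p1,p6}, {p2,p9}, {p5,p12}; loops 3,4,5,6 orientable with ends {p0,p3}, {p4,p7},
{p8,p11}, {p10,p13}.\<close>
definition G_N :: nat where "G_N = 14"

definition G_loop :: "nat \<Rightarrow> nat" where
  "G_loop i = [3, 0, 1, 3, 4, 2, 0, 4, 5, 1, 6, 5, 2, 6] ! i"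

definition G_ori :: "nat \<Rightarrow> bool" where
  "G_ori e \<longleftrightarrow> 3 \<le> e"

end

theory Submission
  imports Defs
begin


lemma key:
  fixes z c :: "nat \<Rightarrow> complex" and b :: "nat \<Rightarrow> real" and K :: "nat \<Rightarrow> nat \<Rightarrow> real"
  assumes pos: "\<forall>i<n. 0 < Re (z i)"
    and skew: "\<forall>i j. K i j = - K j i"
    and eq: "\<forall>i<n. c i + (\<Sum>j<n. of_real (b i * b j + K i j) * (z j * c j)) = 0"
  shows "\<forall>i<n. c i = 0"
proof -
  define u where "u j = z j * c j" for j
  define s where "s = (\<Sum>j<n. of_real (b j) * u j)"
  define T where "T = (\<Sum>i<n. \<Sum>j<n. of_real (K i j) * (cnj (u i) * u j))"
  have "0 = (\<Sum>i<n. cnj (u i) * (c i + (\<Sum>j<n. of_real (b i * b j + K i j) * u j)))"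
    using eq by (simp add: u_def)
  also have "\<dots> = (\<Sum>i<n. cnj (u i) * c i) + (\<Sum>i<n. \<Sum>j<n. of_real (b i * b j) * (cnj (u i) * u j)) + T"
    by (simp add: T_def distrib_left sum.distrib sum_distrib_left algebra_simps)
  also have "(\<Sum>i<n. \<Sum>j<n. of_real (b i * b j) * (cnj (u i) * u j)) = cnj s * s"
    by (simp add: s_def sum_distrib_left sum_distrib_right algebra_simps)
  finally have tot: "0 = (\<Sum>i<n. cnj (u i) * c i) + cnj s * s + T" .
  have "cnj T = (\<Sum>i<n. \<Sum>j<n. of_real (K i j) * (u i * cnj (u j)))"
    by (simp add: T_def)
  also have "\<dots> = (\<Sum>j<n. \<Sum>i<n. of_real (K i j) * (u i * cnj (u j)))"
    by (rule sum.swap)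
  also have "\<dots> = - T"
  proof -
    have pt: "of_real (K i j) * (u i * cnj (u j)) = - (of_real (K j i) * (cnj (u j) * u i))" for i j
      by (subst skew[rule_format, of i j]) (simp add: algebra_simps)
    show ?thesis unfolding T_def by (simp only: pt sum_negf)
  qed
  finally have "cnj T = - T" .
  then have "Re (cnj T) = Re (- T)" by (rule arg_cong)
  then have ReT: "Re T = 0" by simp
  have Rs: "Re (cnj s * s) = (cmod s)^2" by (simp add: complex_mult_cnj cmod_def power2_eq_square)
  have Ru: "Re (cnj (u i) * c i) = Re (z i) * (cmod (c i))^2" for i
    by (simp add: u_def cmod_def power2_eq_square algebra_simps)
  have "0 = (\<Sum>i<n. Re (z i) * (cmod (c i))^2) + (cmod s)^2"
    using arg_cong[OF tot, of Re] ReT Rs Ru by simp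
  moreover have nn: "\<forall>i\<in>{..<n}. 0 \<le> Re (z i) * (cmod (c i))^2" using pos by auto
  ultimately have "(\<Sum>i<n. Re (z i) * (cmod (c i))^2) = 0"
    by (smt (verit) sum_nonneg zero_le_power2)
  then have "\<forall>i\<in>{..<n}. Re (z i) * (cmod (c i))^2 = 0" using sum_nonneg_eq_0_iff[of "{..<n}" "\<lambda>i. Re (z i) * (cmod (c i))^2"] nn by simp
  then have "\<forall>i<n. Re (z i) = 0 \<or> c i = 0" by simp
  then show ?thesis using pos by force
qed


definition bv :: "nat \<Rightarrow> real" where "bv i = (if i < 3 then 1 else 0)"
definition Eset :: "(nat \<times> nat) set" where "Eset = {(0,3),(0,4),(1,3),(1,5),(2,4),(2,6),(5,6)}"
definition Km :: "nat \<Rightarrow> nat \<Rightarrow> real" where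
  "Km i j = (if (i,j) \<in> Eset then 1 else if (j,i) \<in> Eset then -1 else 0)"

lemma Km_skew: "\<forall>i j. Km i j = - Km j i"
  by (auto simp: Km_def Eset_def)

definition D0 :: "(nat \<Rightarrow> complex) \<Rightarrow> complex" where
  "D0 z = (1)"

definition D1 :: "(nat \<Rightarrow> complex) \<Rightarrow> complex" where
  "D1 z = (1 + z 0)"

definition D2 :: "(nat \<Rightarrow> complex) \<Rightarrow> complex" where
  "D2 z = (1 + z 0 + z 1)"

definition D3 :: "(nat \<Rightarrow> complex) \<Rightarrow> complex" where
  "D3 z = (1 + z 0 + z 1 + z 2)"

definition D4 :: "(nat \<Rightarrow> complex) \<Rightarrow> complex" where
  "D4 z = (1 + z 0 + z 1 + z 2 + z 0 * z 3 + z 1 * z 3 + z 0 * z 2 * z 3 + z 1 * z 2 * z 3)"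

definition D5 :: "(nat \<Rightarrow> complex) \<Rightarrow> complex" where
  "D5 z = (1 + z 0 + z 1 + z 2 + z 0 * z 3 + z 0 * z 4 + z 1 * z 3 + z 2 * z 4 + z 0 * z 1 * z 4 + z 0 * z 2 * z 3 + z 1 * z 2 * z 3 + z 1 * z 2 * z 4 + z 0 * z 1 * z 3 * z 4 + z 0 * z 2 * z 3 * z 4 + z 1 * z 2 * z 3 * z 4 + z 0 * z 1 * z 2 * z 3 * z 4)"

definition D6 :: "(nat \<Rightarrow> complex) \<Rightarrow> complex" where
  "D6 z = (1 + z 0 + z 1 + z 2 + z 0 * z 3 + z 0 * z 4 + z 1 * z 3 + z 1 * z 5 + z 2 * z 4 + z 0 * z 1 * z 4 + z 0 * z 1 * z 5 + z 0 * z 2 * z 3 + z 1 * z 2 * z 3 + z 1 * z 2 * z 4 + z 1 * z 2 * z 5 + z 0 * z 1 * z 3 * z 4 + z 0 * z 1 * z 3 * z 5 + z 0 * z 1 * z 4 * z 5 + z 0 * z 2 * z 3 * z 4 + z 1 * z 2 * z 3 * z 4 + z 1 * z 2 * z 4 * z 5 + z 0 * z 1 * z 2 * z 3 * z 4 + z 0 * z 1 * z 2 * z 3 * z 5 + z 0 * z 1 * z 2 * z 3 * z 4 * z 5)"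

definition D7 :: "(nat \<Rightarrow> complex) \<Rightarrow> complex" where
  "D7 z = (1 + z 0 + z 1 + z 2 + z 0 * z 3 + z 0 * z 4 + z 1 * z 3 + z 1 * z 5 + z 2 * z 4 + z 2 * z 6 + z 5 * z 6 + z 0 * z 1 * z 4 + z 0 * z 1 * z 5 + z 0 * z 2 * z 3 + z 0 * z 2 * z 6 + z 0 * z 5 * z 6 + z 1 * z 2 * z 3 + z 1 * z 2 * z 4 + z 1 * z 2 * z 5 + z 1 * z 2 * z 6 + z 1 * z 5 * z 6 + z 2 * z 5 * z 6 + z 0 * z 1 * z 3 * z 4 + z 0 * z 1 * z 3 * z 5 + z 0 * z 1 * z 4 * z 5 + z 0 * z 2 * z 3 * z 4 + z 0 * z 2 * z 3 * z 6 + z 0 * z 2 * z 4 * z 6 + z 0 * z 3 * z 5 * z 6 + z 0 * z 4 * z 5 * z 6 + z 1 * z 2 * z 3 * z 4 + z 1 * z 2 * z 3 * z 6 + z 1 * z 2 * z 4 * z 5 + z 1 * z 2 * z 5 * z 6 + z 1 * z 3 * z 5 * z 6 + z 2 * z 4 * z 5 * z 6 + z 0 * z 1 * z 2 * z 3 * z 4 + z 0 * z 1 * z 2 * z 3 * z 5 + z 0 * z 1 * z 2 * z 4 * z 6 + z 0 * z 1 * z 2 * z 5 * z 6 + z 0 * z 1 * z 4 * z 5 * z 6 + z 0 * z 2 * z 3 * z 5 * z 6 + z 1 * z 2 * z 3 * z 5 * z 6 + z 1 * z 2 * z 4 * z 5 * z 6 + z 0 * z 1 * z 2 * z 3 * z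 4 * z 5 + z 0 * z 1 * z 2 * z 3 * z 4 * z 6 + z 0 * z 1 * z 2 * z 3 * z 5 * z 6 + z 0 * z 1 * z 2 * z 4 * z 5 * z 6 + z 0 * z 1 * z 3 * z 4 * z 5 * z 6 + z 0 * z 2 * z 3 * z 4 * z 5 * z 6 + z 1 * z 2 * z 3 * z 4 * z 5 * z 6 + z 0 * z 1 * z 2 * z 3 * z 4 * z 5 * z 6)"

lemma sum1: "(\<Sum>j<(1::nat). g j) = g 0"
  by (simp add: eval_nat_numeral)

lemma sum2: "(\<Sum>j<(2::nat). g j) = g 0 + g 1"
  by (simp add: eval_nat_numeral)

lemma sum3: "(\<Sum>j<(3::nat). g j) = g 0 + g 1 + g 2"
  by (simp add: eval_nat_numeral)

lemma sum4: "(\<Sum>j<(4::nat). g j) = g 0 + g 1 + g 2 + g 3"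
  by (simp add: eval_nat_numeral)

lemma sum5: "(\<Sum>j<(5::nat). g j) = g 0 + g 1 + g 2 + g 3 + g 4"
  by (simp add: eval_nat_numeral)

lemma sum6: "(\<Sum>j<(6::nat). g j) = g 0 + g 1 + g 2 + g 3 + g 4 + g 5"
  by (simp add: eval_nat_numeral)

lemma sum7: "(\<Sum>j<(7::nat). g j) = g 0 + g 1 + g 2 + g 3 + g 4 + g 5 + g 6"
  by (simp add: eval_nat_numeral)

lemma step1:
  assumes pos: "\<forall>i<7. 0 < Re (z i)" and d: "D1 z = 0"
  shows "D0 z = 0"
proof -
  define c :: "nat \<Rightarrow> complex" where "c = (\<lambda>i. [D0 z] ! i)"
  have h0: "c 0 + (\<Sum>j<1. of_real (bv 0 * bv j + Km 0 j) * (z j * c j)) = 0"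
  proof -
    have "c 0 + (\<Sum>j<1. of_real (bv 0 * bv j + Km 0 j) * (z j * c j)) = D1 z"
    apply (simp add: c_def sum1 bv_def Km_def Eset_def)
    apply (simp only: One_nat_def[symmetric])?
    unfolding D0_def D1_def by algebra
    then show ?thesis using d by simp
  qed
  have eqs: "\<forall>i<1. c i + (\<Sum>j<1. of_real (bv i * bv j + Km i j) * (z j * c j)) = 0"
  proof (intro allI impI)
    fix i :: nat assume "i < 1"
    then have "i = 0" by arith
    then show "c i + (\<Sum>j<1. of_real (bv i * bv j + Km i j) * (z j * c j)) = 0"
      using h0 by auto
  qed
  have "\<forall>i<1. c i = 0" by (rule key[OF _ Km_skew eqs]) (use pos in auto)
  then have "c 0 = 0" by simp
  then show ?thesis by (simp add: c_def)
qed

definition C2_0 :: "(nat \<Rightarrow> complex) \<Rightarrow> complex" where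
  "C2_0 z = (- z 1)"

lemma step2:
  assumes pos: "\<forall>i<7. 0 < Re (z i)" and d: "D2 z = 0"
  shows "D1 z = 0"
proof -
  define c :: "nat \<Rightarrow> complex" where "c = (\<lambda>i. [C2_0 z, D1 z] ! i)"
  have h0: "c 0 + (\<Sum>j<2. of_real (bv 0 * bv j + Km 0 j) * (z j * c j)) = 0"
    apply (simp add: c_def sum2 bv_def Km_def Eset_def)
    apply (simp only: One_nat_def[symmetric])?
    unfolding C2_0_def D1_def D2_def by algebra
  have h1: "c 1 + (\<Sum>j<2. of_real (bv 1 * bv j + Km 1 j) * (z j * c j)) = 0"
  proof -
    have "c 1 + (\<Sum>j<2. of_real (bv 1 * bv j + Km 1 j) * (z j * c j)) = D2 z"
    apply (simp add: c_def sum2 bv_def Km_def Eset_def)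
    apply (simp only: One_nat_def[symmetric])?
    unfolding C2_0_def D1_def D2_def by algebra
    then show ?thesis using d by simp
  qed
  have eqs: "\<forall>i<2. c i + (\<Sum>j<2. of_real (bv i * bv j + Km i j) * (z j * c j)) = 0"
  proof (intro allI impI)
    fix i :: nat assume "i < 2"
    then have "i = 0 \<or> i = 1" by arith
    then show "c i + (\<Sum>j<2. of_real (bv i * bv j + Km i j) * (z j * c j)) = 0"
      using h0 h1 by auto
  qed
  have "\<forall>i<2. c i = 0" by (rule key[OF _ Km_skew eqs]) (use pos in auto)
  then have "c 1 = 0" by simp
  then show ?thesis by (simp add: c_def)
qed

definition C3_0 :: "(nat \<Rightarrow> complex) \<Rightarrow> complex" where
  "C3_0 z = (- z 2)"

definition C3_1 :: "(nat \<Rightarrow> complex) \<Rightarrow> complex" where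
  "C3_1 z = (- z 2)"

lemma step3:
  assumes pos: "\<forall>i<7. 0 < Re (z i)" and d: "D3 z = 0"
  shows "D2 z = 0"
proof -
  define c :: "nat \<Rightarrow> complex" where "c = (\<lambda>i. [C3_0 z, C3_1 z, D2 z] ! i)"
  have h0: "c 0 + (\<Sum>j<3. of_real (bv 0 * bv j + Km 0 j) * (z j * c j)) = 0"
    apply (simp add: c_def sum3 bv_def Km_def Eset_def)
    apply (simp only: One_nat_def[symmetric])?
    unfolding C3_0_def C3_1_def D2_def D3_def by algebra
  have h1: "c 1 + (\<Sum>j<3. of_real (bv 1 * bv j + Km 1 j) * (z j * c j)) = 0"
    apply (simp add: c_def sum3 bv_def Km_def Eset_def)
    apply (simp only: One_nat_def[symmetric])?
    unfolding C3_0_def C3_1_def D2_def D3_def by algebra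
  have h2: "c 2 + (\<Sum>j<3. of_real (bv 2 * bv j + Km 2 j) * (z j * c j)) = 0"
  proof -
    have "c 2 + (\<Sum>j<3. of_real (bv 2 * bv j + Km 2 j) * (z j * c j)) = D3 z"
    apply (simp add: c_def sum3 bv_def Km_def Eset_def)
    apply (simp only: One_nat_def[symmetric])?
    unfolding C3_0_def C3_1_def D2_def D3_def by algebra
    then show ?thesis using d by simp
  qed
  have eqs: "\<forall>i<3. c i + (\<Sum>j<3. of_real (bv i * bv j + Km i j) * (z j * c j)) = 0"
  proof (intro allI impI)
    fix i :: nat assume "i < 3"
    then have "i = 0 \<or> i = 1 \<or> i = 2" by arith
    then show "c i + (\<Sum>j<3. of_real (bv i * bv j + Km i j) * (z j * c j)) = 0"
      using h0 h1 h2 by auto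
  qed
  have "\<forall>i<3. c i = 0" by (rule key[OF _ Km_skew eqs]) (use pos in auto)
  then have "c 2 = 0" by simp
  then show ?thesis by (simp add: c_def)
qed

definition C4_0 :: "(nat \<Rightarrow> complex) \<Rightarrow> complex" where
  "C4_0 z = (- z 3 - z 2 * z 3)"

definition C4_1 :: "(nat \<Rightarrow> complex) \<Rightarrow> complex" where
  "C4_1 z = (- z 3 - z 2 * z 3)"

definition C4_2 :: "(nat \<Rightarrow> complex) \<Rightarrow> complex" where
  "C4_2 z = (z 0 * z 3 + z 1 * z 3)"

lemma step4:
  assumes pos: "\<forall>i<7. 0 < Re (z i)" and d: "D4 z = 0"
  shows "D3 z = 0"
proof -
  define c :: "nat \<Rightarrow> complex" where "c = (\<lambda>i. [C4_0 z, C4_1 z, C4_2 z, D3 z] ! i)"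
  have h0: "c 0 + (\<Sum>j<4. of_real (bv 0 * bv j + Km 0 j) * (z j * c j)) = 0"
    apply (simp add: c_def sum4 bv_def Km_def Eset_def)
    apply (simp only: One_nat_def[symmetric])?
    unfolding C4_0_def C4_1_def C4_2_def D3_def D4_def by algebra
  have h1: "c 1 + (\<Sum>j<4. of_real (bv 1 * bv j + Km 1 j) * (z j * c j)) = 0"
    apply (simp add: c_def sum4 bv_def Km_def Eset_def)
    apply (simp only: One_nat_def[symmetric])?
    unfolding C4_0_def C4_1_def C4_2_def D3_def D4_def by algebra
  have h2: "c 2 + (\<Sum>j<4. of_real (bv 2 * bv j + Km 2 j) * (z j * c j)) = 0"
    apply (simp add: c_def sum4 bv_def Km_def Eset_def)
    apply (simp only: One_nat_def[symmetric])?
    unfolding C4_0_def C4_1_def C4_2_def D3_def D4_def by algebra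
  have h3: "c 3 + (\<Sum>j<4. of_real (bv 3 * bv j + Km 3 j) * (z j * c j)) = 0"
  proof -
    have "c 3 + (\<Sum>j<4. of_real (bv 3 * bv j + Km 3 j) * (z j * c j)) = D4 z"
    apply (simp add: c_def sum4 bv_def Km_def Eset_def)
    apply (simp only: One_nat_def[symmetric])?
    unfolding C4_0_def C4_1_def C4_2_def D3_def D4_def by algebra
    then show ?thesis using d by simp
  qed
  have eqs: "\<forall>i<4. c i + (\<Sum>j<4. of_real (bv i * bv j + Km i j) * (z j * c j)) = 0"
  proof (intro allI impI)
    fix i :: nat assume "i < 4"
    then have "i = 0 \<or> i = 1 \<or> i = 2 \<or> i = 3" by arith
    then show "c i + (\<Sum>j<4. of_real (bv i * bv j + Km i j) * (z j * c j)) = 0"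
      using h0 h1 h2 h3 by auto
  qed
  have "\<forall>i<4. c i = 0" by (rule key[OF _ Km_skew eqs]) (use pos in auto)
  then have "c 3 = 0" by simp
  then show ?thesis by (simp add: c_def)
qed

definition C5_0 :: "(nat \<Rightarrow> complex) \<Rightarrow> complex" where
  "C5_0 z = (- z 4 - z 1 * z 4 - z 1 * z 3 * z 4 - z 1 * z 2 * z 3 * z 4)"

definition C5_1 :: "(nat \<Rightarrow> complex) \<Rightarrow> complex" where
  "C5_1 z = (z 0 * z 4 + z 2 * z 4 + z 0 * z 3 * z 4 + z 0 * z 2 * z 3 * z 4)"

definition C5_2 :: "(nat \<Rightarrow> complex) \<Rightarrow> complex" where
  "C5_2 z = (- z 4 - z 1 * z 4 - z 0 * z 3 * z 4 - z 1 * z 3 * z 4)"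

definition C5_3 :: "(nat \<Rightarrow> complex) \<Rightarrow> complex" where
  "C5_3 z = (- z 0 * z 4 + z 1 * z 2 * z 4)"

lemma step5:
  assumes pos: "\<forall>i<7. 0 < Re (z i)" and d: "D5 z = 0"
  shows "D4 z = 0"
proof -
  define c :: "nat \<Rightarrow> complex" where "c = (\<lambda>i. [C5_0 z, C5_1 z, C5_2 z, C5_3 z, D4 z] ! i)"
  have h0: "c 0 + (\<Sum>j<5. of_real (bv 0 * bv j + Km 0 j) * (z j * c j)) = 0"
    apply (simp add: c_def sum5 bv_def Km_def Eset_def)
    apply (simp only: One_nat_def[symmetric])?
    unfolding C5_0_def C5_1_def C5_2_def C5_3_def D4_def D5_def by algebra
  have h1: "c 1 + (\<Sum>j<5. of_real (bv 1 * bv j + Km 1 j) * (z j * c j)) = 0"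
    apply (simp add: c_def sum5 bv_def Km_def Eset_def)
    apply (simp only: One_nat_def[symmetric])?
    unfolding C5_0_def C5_1_def C5_2_def C5_3_def D4_def D5_def by algebra
  have h2: "c 2 + (\<Sum>j<5. of_real (bv 2 * bv j + Km 2 j) * (z j * c j)) = 0"
    apply (simp add: c_def sum5 bv_def Km_def Eset_def)
    apply (simp only: One_nat_def[symmetric])?
    unfolding C5_0_def C5_1_def C5_2_def C5_3_def D4_def D5_def by algebra
  have h3: "c 3 + (\<Sum>j<5. of_real (bv 3 * bv j + Km 3 j) * (z j * c j)) = 0"
    apply (simp add: c_def sum5 bv_def Km_def Eset_def)
    apply (simp only: One_nat_def[symmetric])?
    unfolding C5_0_def C5_1_def C5_2_def C5_3_def D4_def D5_def by algebra
  have h4: "c 4 + (\<Sum>j<5. of_real (bv 4 * bv j + Km 4 j) * (z j * c j)) = 0"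
  proof -
    have "c 4 + (\<Sum>j<5. of_real (bv 4 * bv j + Km 4 j) * (z j * c j)) = D5 z"
    apply (simp add: c_def sum5 bv_def Km_def Eset_def)
    apply (simp only: One_nat_def[symmetric])?
    unfolding C5_0_def C5_1_def C5_2_def C5_3_def D4_def D5_def by algebra
    then show ?thesis using d by simp
  qed
  have eqs: "\<forall>i<5. c i + (\<Sum>j<5. of_real (bv i * bv j + Km i j) * (z j * c j)) = 0"
  proof (intro allI impI)
    fix i :: nat assume "i < 5"
    then have "i = 0 \<or> i = 1 \<or> i = 2 \<or> i = 3 \<or> i = 4" by arith
    then show "c i + (\<Sum>j<5. of_real (bv i * bv j + Km i j) * (z j * c j)) = 0"
      using h0 h1 h2 h3 h4 by auto
  qed
  have "\<forall>i<5. c i = 0" by (rule key[OF _ Km_skew eqs]) (use pos in auto)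
  then have "c 4 = 0" by simp
  then show ?thesis by (simp add: c_def)
qed

definition C6_0 :: "(nat \<Rightarrow> complex) \<Rightarrow> complex" where
  "C6_0 z = (z 1 * z 5 + z 1 * z 3 * z 5 + z 1 * z 2 * z 3 * z 5 + z 1 * z 2 * z 3 * z 4 * z 5)"

definition C6_1 :: "(nat \<Rightarrow> complex) \<Rightarrow> complex" where
  "C6_1 z = (- z 5 - z 0 * z 5 - z 2 * z 5 - z 0 * z 3 * z 5 - z 0 * z 4 * z 5 - z 2 * z 4 * z 5 - z 0 * z 2 * z 3 * z 5 - z 0 * z 2 * z 3 * z 4 * z 5)"

definition C6_2 :: "(nat \<Rightarrow> complex) \<Rightarrow> complex" where
  "C6_2 z = (z 1 * z 5 - z 0 * z 1 * z 3 * z 4 * z 5)"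

definition C6_3 :: "(nat \<Rightarrow> complex) \<Rightarrow> complex" where
  "C6_3 z = (- z 1 * z 5 - z 1 * z 2 * z 5 - z 0 * z 1 * z 4 * z 5 - z 1 * z 2 * z 4 * z 5)"

definition C6_4 :: "(nat \<Rightarrow> complex) \<Rightarrow> complex" where
  "C6_4 z = (z 0 * z 1 * z 5 + z 1 * z 2 * z 5 + z 0 * z 1 * z 3 * z 5 + z 0 * z 1 * z 2 * z 3 * z 5)"

lemma step6:
  assumes pos: "\<forall>i<7. 0 < Re (z i)" and d: "D6 z = 0"
  shows "D5 z = 0"
proof -
  define c :: "nat \<Rightarrow> complex" where "c = (\<lambda>i. [C6_0 z, C6_1 z, C6_2 z, C6_3 z, C6_4 z, D5 z] ! i)"
  have h0: "c 0 + (\<Sum>j<6. of_real (bv 0 * bv j + Km 0 j) * (z j * c j)) = 0"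
    apply (simp add: c_def sum6 bv_def Km_def Eset_def)
    apply (simp only: One_nat_def[symmetric])?
    unfolding C6_0_def C6_1_def C6_2_def C6_3_def C6_4_def D5_def D6_def by algebra
  have h1: "c 1 + (\<Sum>j<6. of_real (bv 1 * bv j + Km 1 j) * (z j * c j)) = 0"
    apply (simp add: c_def sum6 bv_def Km_def Eset_def)
    apply (simp only: One_nat_def[symmetric])?
    unfolding C6_0_def C6_1_def C6_2_def C6_3_def C6_4_def D5_def D6_def by algebra
  have h2: "c 2 + (\<Sum>j<6. of_real (bv 2 * bv j + Km 2 j) * (z j * c j)) = 0"
    apply (simp add: c_def sum6 bv_def Km_def Eset_def)
    apply (simp only: One_nat_def[symmetric])?
    unfolding C6_0_def C6_1_def C6_2_def C6_3_def C6_4_def D5_def D6_def by algebra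
  have h3: "c 3 + (\<Sum>j<6. of_real (bv 3 * bv j + Km 3 j) * (z j * c j)) = 0"
    apply (simp add: c_def sum6 bv_def Km_def Eset_def)
    apply (simp only: One_nat_def[symmetric])?
    unfolding C6_0_def C6_1_def C6_2_def C6_3_def C6_4_def D5_def D6_def by algebra
  have h4: "c 4 + (\<Sum>j<6. of_real (bv 4 * bv j + Km 4 j) * (z j * c j)) = 0"
    apply (simp add: c_def sum6 bv_def Km_def Eset_def)
    apply (simp only: One_nat_def[symmetric])?
    unfolding C6_0_def C6_1_def C6_2_def C6_3_def C6_4_def D5_def D6_def by algebra
  have h5: "c 5 + (\<Sum>j<6. of_real (bv 5 * bv j + Km 5 j) * (z j * c j)) = 0"
  proof -
    have "c 5 + (\<Sum>j<6. of_real (bv 5 * bv j + Km 5 j) * (z j * c j)) = D6 z"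
    apply (simp add: c_def sum6 bv_def Km_def Eset_def)
    apply (simp only: One_nat_def[symmetric])?
    unfolding C6_0_def C6_1_def C6_2_def C6_3_def C6_4_def D5_def D6_def by algebra
    then show ?thesis using d by simp
  qed
  have eqs: "\<forall>i<6. c i + (\<Sum>j<6. of_real (bv i * bv j + Km i j) * (z j * c j)) = 0"
  proof (intro allI impI)
    fix i :: nat assume "i < 6"
    then have "i = 0 \<or> i = 1 \<or> i = 2 \<or> i = 3 \<or> i = 4 \<or> i = 5" by arith
    then show "c i + (\<Sum>j<6. of_real (bv i * bv j + Km i j) * (z j * c j)) = 0"
      using h0 h1 h2 h3 h4 h5 by auto
  qed
  have "\<forall>i<6. c i = 0" by (rule key[OF _ Km_skew eqs]) (use pos in auto)
  then have "c 5 = 0" by simp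
  then show ?thesis by (simp add: c_def)
qed

definition C7_0 :: "(nat \<Rightarrow> complex) \<Rightarrow> complex" where
  "C7_0 z = (z 2 * z 6 - z 1 * z 5 * z 6 + z 2 * z 4 * z 6 + z 1 * z 2 * z 4 * z 6 + z 1 * z 2 * z 5 * z 6 - z 1 * z 3 * z 5 * z 6 + z 1 * z 2 * z 3 * z 4 * z 6 - z 1 * z 2 * z 3 * z 5 * z 6 + z 1 * z 2 * z 4 * z 5 * z 6 - z 1 * z 2 * z 3 * z 4 * z 5 * z 6)"

definition C7_1 :: "(nat \<Rightarrow> complex) \<Rightarrow> complex" where
  "C7_1 z = (z 2 * z 6 + z 5 * z 6 + z 0 * z 5 * z 6 + z 2 * z 5 * z 6 + z 0 * z 3 * z 5 * z 6 + z 0 * z 4 * z 5 * z 6 + z 2 * z 4 * z 5 * z 6 - z 0 * z 2 * z 3 * z 4 * z 6 + z 0 * z 2 * z 3 * z 5 * z 6 + z 0 * z 2 * z 3 * z 4 * z 5 * z 6)"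

definition C7_2 :: "(nat \<Rightarrow> complex) \<Rightarrow> complex" where
  "C7_2 z = (- z 6 - z 0 * z 6 - z 1 * z 6 - z 0 * z 3 * z 6 - z 0 * z 4 * z 6 - z 1 * z 3 * z 6 - 2 * z 1 * z 5 * z 6 - z 0 * z 1 * z 4 * z 6 - z 0 * z 1 * z 5 * z 6 - z 0 * z 1 * z 3 * z 4 * z 6 - z 0 * z 1 * z 3 * z 5 * z 6 - z 0 * z 1 * z 4 * z 5 * z 6 + z 0 * z 1 * z 3 * z 4 * z 5 * z 6)"

definition C7_3 :: "(nat \<Rightarrow> complex) \<Rightarrow> complex" where
  "C7_3 z = (z 0 * z 2 * z 6 + z 1 * z 2 * z 6 + z 1 * z 5 * z 6 + z 0 * z 2 * z 4 * z 6 + z 1 * z 2 * z 5 * z 6 + z 0 * z 1 * z 2 * z 4 * z 6 + z 0 * z 1 * z 2 * z 5 * z 6 + z 0 * z 1 * z 4 * z 5 * z 6 + z 1 * z 2 * z 4 * z 5 * z 6 + z 0 * z 1 * z 2 * z 4 * z 5 * z 6)"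

definition C7_4 :: "(nat \<Rightarrow> complex) \<Rightarrow> complex" where
  "C7_4 z = (- z 2 * z 6 - z 1 * z 2 * z 6 - z 0 * z 1 * z 5 * z 6 - z 0 * z 2 * z 3 * z 6 - z 1 * z 2 * z 3 * z 6 - 2 * z 1 * z 2 * z 5 * z 6 - z 0 * z 1 * z 3 * z 5 * z 6 - 2 * z 0 * z 1 * z 2 * z 3 * z 5 * z 6)"

definition C7_5 :: "(nat \<Rightarrow> complex) \<Rightarrow> complex" where
  "C7_5 z = (- z 6 - z 0 * z 6 - z 1 * z 6 - z 2 * z 6 - z 0 * z 3 * z 6 - z 0 * z 4 * z 6 + z 1 * z 2 * z 6 - z 1 * z 3 * z 6 - z 2 * z 4 * z 6 - z 0 * z 1 * z 4 * z 6 - z 0 * z 2 * z 3 * z 6 - z 1 * z 2 * z 3 * z 6 - z 1 * z 2 * z 4 * z 6 - z 0 * z 1 * z 3 * z 4 * z 6 - z 0 * z 2 * z 3 * z 4 * z 6 - z 1 * z 2 * z 3 * z 4 * z 6 - 2 * z 0 * z 1 * z 2 * z 3 * z 4 * z 6)"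

lemma step7:
  assumes pos: "\<forall>i<7. 0 < Re (z i)" and d: "D7 z = 0"
  shows "D6 z = 0"
proof -
  define c :: "nat \<Rightarrow> complex" where "c = (\<lambda>i. [C7_0 z, C7_1 z, C7_2 z, C7_3 z, C7_4 z, C7_5 z, D6 z] ! i)"
  have h0: "c 0 + (\<Sum>j<7. of_real (bv 0 * bv j + Km 0 j) * (z j * c j)) = 0"
    apply (simp add: c_def sum7 bv_def Km_def Eset_def)
    apply (simp only: One_nat_def[symmetric])?
    unfolding C7_0_def C7_1_def C7_2_def C7_3_def C7_4_def C7_5_def D6_def D7_def by algebra
  have h1: "c 1 + (\<Sum>j<7. of_real (bv 1 * bv j + Km 1 j) * (z j * c j)) = 0"
    apply (simp add: c_def sum7 bv_def Km_def Eset_def)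
    apply (simp only: One_nat_def[symmetric])?
    unfolding C7_0_def C7_1_def C7_2_def C7_3_def C7_4_def C7_5_def D6_def D7_def by algebra
  have h2: "c 2 + (\<Sum>j<7. of_real (bv 2 * bv j + Km 2 j) * (z j * c j)) = 0"
    apply (simp add: c_def sum7 bv_def Km_def Eset_def)
    apply (simp only: One_nat_def[symmetric])?
    unfolding C7_0_def C7_1_def C7_2_def C7_3_def C7_4_def C7_5_def D6_def D7_def by algebra
  have h3: "c 3 + (\<Sum>j<7. of_real (bv 3 * bv j + Km 3 j) * (z j * c j)) = 0"
    apply (simp add: c_def sum7 bv_def Km_def Eset_def)
    apply (simp only: One_nat_def[symmetric])?
    unfolding C7_0_def C7_1_def C7_2_def C7_3_def C7_4_def C7_5_def D6_def D7_def by algebra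
  have h4: "c 4 + (\<Sum>j<7. of_real (bv 4 * bv j + Km 4 j) * (z j * c j)) = 0"
    apply (simp add: c_def sum7 bv_def Km_def Eset_def)
    apply (simp only: One_nat_def[symmetric])?
    unfolding C7_0_def C7_1_def C7_2_def C7_3_def C7_4_def C7_5_def D6_def D7_def by algebra
  have h5: "c 5 + (\<Sum>j<7. of_real (bv 5 * bv j + Km 5 j) * (z j * c j)) = 0"
    apply (simp add: c_def sum7 bv_def Km_def Eset_def)
    apply (simp only: One_nat_def[symmetric])?
    unfolding C7_0_def C7_1_def C7_2_def C7_3_def C7_4_def C7_5_def D6_def D7_def by algebra
  have h6: "c 6 + (\<Sum>j<7. of_real (bv 6 * bv j + Km 6 j) * (z j * c j)) = 0"
  proof -
    have "c 6 + (\<Sum>j<7. of_real (bv 6 * bv j + Km 6 j) * (z j * c j)) = D7 z"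
    apply (simp add: c_def sum7 bv_def Km_def Eset_def)
    apply (simp only: One_nat_def[symmetric])?
    unfolding C7_0_def C7_1_def C7_2_def C7_3_def C7_4_def C7_5_def D6_def D7_def by algebra
    then show ?thesis using d by simp
  qed
  have eqs: "\<forall>i<7. c i + (\<Sum>j<7. of_real (bv i * bv j + Km i j) * (z j * c j)) = 0"
  proof (intro allI impI)
    fix i :: nat assume "i < 7"
    then have "i = 0 \<or> i = 1 \<or> i = 2 \<or> i = 3 \<or> i = 4 \<or> i = 5 \<or> i = 6" by arith
    then show "c i + (\<Sum>j<7. of_real (bv i * bv j + Km i j) * (z j * c j)) = 0"
      using h0 h1 h2 h3 h4 h5 h6 by auto
  qed
  have "\<forall>i<7. c i = 0" by (rule key[OF _ Km_skew eqs]) (use pos in auto)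
  then have "c 6 = 0" by simp
  then show ?thesis by (simp add: c_def)
qed

lemma D7_nz: "\<forall>i<7. 0 < Re (z i) \<Longrightarrow> D7 z \<noteq> 0"
  using step1 step2 step3 step4 step5 step6 step7 by (fastforce simp: D0_def)



definition partner :: "nat \<Rightarrow> nat" where
  "partner i = [3,6,9,0,7,12,1,4,11,2,13,8,5,10] ! i"

definition arcn :: "nat \<times> bool \<Rightarrow> nat \<times> bool" where
  "arcn x = (if snd x then (Suc (fst x) mod 14, False) else ((fst x + 13) mod 14, True))"

definition oth :: "nat set \<Rightarrow> nat \<times> bool \<Rightarrow> nat \<times> bool" where
  "oth Q x = (if G_loop (fst x) \<in> Q then (partner (fst x), if G_ori (G_loop (fst x)) then \<not> snd x else snd x)
              else (fst x, \<not> snd x))"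

definition fstep :: "nat set \<Rightarrow> nat \<times> bool \<Rightarrow> nat \<times> bool" where
  "fstep Q x = arcn (oth Q x)"

fun wk :: "nat set \<Rightarrow> nat \<times> bool \<Rightarrow> nat \<Rightarrow> (nat \<times> bool) list" where
  "wk Q x 0 = []"
| "wk Q x (Suc n) = x # oth Q x # wk Q (fstep Q x) n"

fun orb :: "nat set \<Rightarrow> nat \<times> bool \<Rightarrow> nat \<Rightarrow> (nat \<times> bool) list" where
  "orb Q x 0 = []"
| "orb Q x (Suc n) = x # orb Q (fstep Q x) n"

lemma wk_num: "wk Q x (numeral k) = x # oth Q x # wk Q (fstep Q x) (pred_numeral k)"
  by (simp add: numeral_eq_Suc)
lemma orb_num: "orb Q x (numeral k) = x # orb Q (fstep Q x) (pred_numeral k)"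
  by (simp add: numeral_eq_Suc)

lemma enum14: "(c::nat) < 14 \<Longrightarrow> c = 0 \<or> c = 1 \<or> c = 2 \<or> c = 3 \<or> c = 4 \<or> c = 5 \<or> c = 6 \<or> c = 7 \<or> c = 8 \<or> c = 9 \<or> c = 10 \<or> c = 11 \<or> c = 12 \<or> c = 13"
  by arith

lemma partner_iff: "i < 14 \<Longrightarrow> j < 14 \<Longrightarrow> (j \<noteq> i \<and> G_loop j = G_loop i) \<longleftrightarrow> j = partner i"
  apply (drule enum14, drule enum14)
  by (elim disjE; simp add: G_loop_def partner_def)

lemma partner_props: "i < 14 \<Longrightarrow> partner i < 14 \<and> partner (partner i) = i \<and> G_loop (partner i) = G_loop i"
  apply (drule enum14)
  by (elim disjE; simp add: G_loop_def partner_def)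

lemma arc_iff: "i < 14 \<Longrightarrow> j < 14 \<Longrightarrow> (i = Suc j mod 14) \<longleftrightarrow> j = (i + 13) mod 14"
  apply (drule enum14, drule enum14)
  by (elim disjE; simp)

lemma adj_iff:
  assumes "i < 14" "j < 14"
  shows "bdry_adj 14 G_loop G_ori Q (i,s) (j,t) \<longleftrightarrow> ((j,t) = arcn (i,s) \<or> (j,t) = oth Q (i,s))"
proof -
  have "(j \<noteq> i \<and> G_loop j = G_loop i) \<longleftrightarrow> j = partner i" using partner_iff assms by blast
  moreover have "(i = Suc j mod 14) \<longleftrightarrow> j = (i + 13) mod 14" using arc_iff assms by blast
  ultimately show ?thesis using assms
    unfolding bdry_adj_def arcn_def oth_def by (cases s; cases t; auto)
qed



definition PP :: "(nat \<times> bool) set" where "PP = bdry_points 14"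

lemma inPP: "x \<in> PP \<longleftrightarrow> fst x < 14"
  by (cases x) (auto simp: PP_def bdry_points_def)

lemma arcn_PP: "x \<in> PP \<Longrightarrow> arcn x \<in> PP" by (simp add: inPP arcn_def)
lemma oth_PP: "x \<in> PP \<Longrightarrow> oth Q x \<in> PP" using partner_props by (simp add: inPP oth_def)
lemma arcn_inv: "x \<in> PP \<Longrightarrow> arcn (arcn x) = x"
proof (cases x)
  case (Pair a b)
  assume "x \<in> PP"
  then have a: "a < 14" using Pair by (simp add: inPP)
  have "Suc ((a + 13) mod 14) mod 14 = a" "(Suc a mod 14 + 13) mod 14 = a" using a by presburger+
  then show ?thesis using Pair by (simp add: arcn_def)
qed
lemma oth_inv: "x \<in> PP \<Longrightarrow> oth Q (oth Q x) = x"
  using partner_props[of "fst x"] by (cases x) (auto simp: inPP oth_def)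

definition RR :: "nat set \<Rightarrow> ((nat \<times> bool) \<times> (nat \<times> bool)) set" where
  "RR Q = {(x, y). x \<in> PP \<and> y \<in> PP \<and> bdry_adj 14 G_loop G_ori Q x y}"

lemma RR_iff: "(x,y) \<in> RR Q \<longleftrightarrow> x \<in> PP \<and> y \<in> PP \<and> (y = arcn x \<or> y = oth Q x)"
proof (cases x; cases y)
  fix a b c d assume xy: "x = (a,b)" "y = (c,d)"
  show ?thesis
  proof (cases "a < 14 \<and> c < 14")
    case True
    then show ?thesis using adj_iff[of a c Q b d] xy by (auto simp: RR_def inPP)
  qed (use xy in \<open>auto simp: RR_def inPP\<close>)
qed

lemma RR_sym: "sym (RR Q)"
  unfolding sym_def RR_iff using arcn_inv oth_inv by metis

lemma num_eq: "num_boundary_components 14 G_loop G_ori Q = card (PP // (RR Q)\<^sup>*)"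
  unfolding num_boundary_components_def PP_def RR_def G_N_def by simp

lemma class_sub: "x \<in> PP \<Longrightarrow> (RR Q)\<^sup>* `` {x} \<subseteq> PP"
proof
  fix y assume "x \<in> PP" "y \<in> (RR Q)\<^sup>* `` {x}"
  then have "(x,y) \<in> (RR Q)\<^sup>*" by simp
  then show "y \<in> PP" using \<open>x \<in> PP\<close> by (induction rule: rtrancl_induct) (auto simp: RR_iff)
qed

lemma card_one_iff:
  assumes "x \<in> PP"
  shows "card (PP // (RR Q)\<^sup>*) = 1 \<longleftrightarrow> (\<forall>y\<in>PP. (x,y) \<in> (RR Q)\<^sup>*)"
proof
  assume c: "card (PP // (RR Q)\<^sup>*) = 1"
  then obtain C where C: "PP // (RR Q)\<^sup>* = {C}" using card_1_singletonE by blast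
  show "\<forall>y\<in>PP. (x,y) \<in> (RR Q)\<^sup>*"
  proof
    fix y assume y: "y \<in> PP"
    have "(RR Q)\<^sup>* `` {x} = C" using quotientI[OF assms, of "(RR Q)\<^sup>*"] C by blast
    moreover have "(RR Q)\<^sup>* `` {y} = C" using quotientI[OF y, of "(RR Q)\<^sup>*"] C by blast
    ultimately have "y \<in> (RR Q)\<^sup>* `` {x}" by auto
    then show "(x,y) \<in> (RR Q)\<^sup>*" by simp
  qed
next
  assume all: "\<forall>y\<in>PP. (x,y) \<in> (RR Q)\<^sup>*"
  have symm: "sym ((RR Q)\<^sup>*)" using RR_sym sym_rtrancl by blast
  have "\<And>y. y \<in> PP \<Longrightarrow> (RR Q)\<^sup>* `` {y} = PP"
  proof
    fix y assume y: "y \<in> PP"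
    show "(RR Q)\<^sup>* `` {y} \<subseteq> PP" using class_sub y by blast
    show "PP \<subseteq> (RR Q)\<^sup>* `` {y}"
    proof
      fix w assume "w \<in> PP"
      have "(y,x) \<in> (RR Q)\<^sup>*" using all y symm by (meson symD)
      moreover have "(x,w) \<in> (RR Q)\<^sup>*" using all \<open>w \<in> PP\<close> by blast
      ultimately show "w \<in> (RR Q)\<^sup>* `` {y}" by (meson Image_singleton_iff rtrancl_trans)
    qed
  qed
  then have "PP // (RR Q)\<^sup>* = {PP}" using assms unfolding quotient_def by blast
  then show "card (PP // (RR Q)\<^sup>*) = 1" by simp
qed

lemma x0PP: "(0,False) \<in> PP" by (simp add: inPP)

lemma wk_reach: "x \<in> PP \<Longrightarrow> y \<in> set (wk Q x n) \<Longrightarrow> (x,y) \<in> (RR Q)\<^sup>*"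
proof (induction n arbitrary: x)
  case 0 then show ?case by simp
next
  case (Suc n)
  have r1: "(x, oth Q x) \<in> RR Q" using Suc.prems oth_PP by (simp add: RR_iff)
  have r2: "(oth Q x, fstep Q x) \<in> RR Q" using Suc.prems oth_PP arcn_PP by (simp add: RR_iff fstep_def)
  have fP: "fstep Q x \<in> PP" using Suc.prems oth_PP arcn_PP by (simp add: fstep_def)
  from Suc.prems(2) consider "y = x" | "y = oth Q x" | "y \<in> set (wk Q (fstep Q x) n)" by auto
  then show ?case
  proof cases
    case 3
    then have "(fstep Q x, y) \<in> (RR Q)\<^sup>*" using Suc.IH fP by blast
    then show ?thesis using r1 r2 by (meson converse_rtrancl_into_rtrancl)
  qed (use r1 in auto)
qed

lemma wk_sub: "x \<in> PP \<Longrightarrow> set (wk Q x n) \<subseteq> PP"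
  by (induction n arbitrary: x) (auto simp: oth_PP arcn_PP fstep_def)

lemma wk_len: "length (wk Q x n) = 2 * n"
  by (induction n arbitrary: x) auto

lemma card_PP: "card PP = 28"
  by (simp add: PP_def bdry_points_def card_cartesian_product)

lemma qt_yes:
  assumes "distinct (wk Q (0,False) 14)"
  shows "num_boundary_components 14 G_loop G_ori Q = 1"
proof -
  have s: "set (wk Q (0,False) 14) \<subseteq> PP" using wk_sub x0PP by blast
  have "card (set (wk Q (0,False) 14)) = 28" using distinct_card[OF assms] wk_len by simp
  then have "set (wk Q (0,False) 14) = PP" using s card_PP
    by (metis card_subset_eq finite_cartesian_product finite_lessThan finite UNIV_bool PP_def bdry_points_def finite_code)
  then have "\<forall>y\<in>PP. ((0,False),y) \<in> (RR Q)\<^sup>*" using wk_reach[OF x0PP, of _ Q 14] by blast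
  then show ?thesis unfolding num_eq using card_one_iff[OF x0PP] by simp
qed

lemma set_Suc_split: "{g k | k. k < Suc n} = insert (g 0) {g (Suc k) | k. k < n}"
proof
  show "{g k | k. k < Suc n} \<subseteq> insert (g 0) {g (Suc k) | k. k < n}"
  proof
    fix y assume "y \<in> {g k | k. k < Suc n}"
    then obtain k where "k < Suc n" "y = g k" by blast
    then show "y \<in> insert (g 0) {g (Suc k) | k. k < n}" by (cases k) auto
  qed
qed auto

lemma wk_set: "set (wk Q x n) = {(fstep Q ^^ k) x | k. k < n} \<union> {oth Q ((fstep Q ^^ k) x) | k. k < n}"
proof (induction n arbitrary: x)
  case 0 then show ?case by simp
next
  case (Suc n)
  have "{(fstep Q ^^ k) x | k. k < Suc n} = insert x {(fstep Q ^^ k) (fstep Q x) | k. k < n}"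
    using set_Suc_split[of "\<lambda>k. (fstep Q ^^ k) x" n] by (simp add: funpow_swap1)
  moreover have "{oth Q ((fstep Q ^^ k) x) | k. k < Suc n} = insert (oth Q x) {oth Q ((fstep Q ^^ k) (fstep Q x)) | k. k < n}"
    using set_Suc_split[of "\<lambda>k. oth Q ((fstep Q ^^ k) x)" n] by (simp add: funpow_swap1)
  ultimately show ?case using Suc.IH[of "fstep Q x"] by auto
qed

lemma fpow_PP: "x \<in> PP \<Longrightarrow> (fstep Q ^^ k) x \<in> PP"
  by (induction k) (auto simp: fstep_def arcn_PP oth_PP)

lemma orb_set: "y \<in> set (orb Q x n) \<Longrightarrow> \<exists>k<n. y = (fstep Q ^^ k) x"
proof (induction n arbitrary: x)
  case 0 then show ?case by simp
next
  case (Suc n)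
  then consider "y = x" | "y \<in> set (orb Q (fstep Q x) n)" by auto
  then show ?case
  proof cases
    case 1 then show ?thesis by (intro exI[of _ 0]) auto
  next
    case 2
    then obtain k where "k < n" "y = (fstep Q ^^ k) (fstep Q x)" using Suc.IH by blast
    then show ?thesis by (intro exI[of _ "Suc k"]) (simp add: funpow_swap1)
  qed
qed

lemma qt_no:
  assumes "(0,False) \<in> set (orb Q (fstep Q (0,False)) 13)"
  shows "num_boundary_components 14 G_loop G_ori Q \<noteq> 1"
proof -
  define x0 where "x0 = ((0::nat),False)"
  obtain k where k: "k < 13" "x0 = (fstep Q ^^ k) (fstep Q x0)" using orb_set assms x0_def by blast
  define m where "m = Suc k"
  have m: "(fstep Q ^^ m) x0 = x0" "m \<le> 13" "0 < m" using k by (auto simp: m_def funpow_swap1)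
  define C where "C = set (wk Q x0 m)"
  have x0C: "x0 \<in> C" using m by (cases m) (auto simp: C_def)
  have closed: "y \<in> C \<Longrightarrow> (y,w) \<in> RR Q \<Longrightarrow> w \<in> C" for y w
  proof -
    assume yC: "y \<in> C" and yw: "(y,w) \<in> RR Q"
    then have yP: "y \<in> PP" and wy: "w = arcn y \<or> w = oth Q y" by (auto simp: RR_iff)
    from yC consider k where "k < m" "y = (fstep Q ^^ k) x0" | k where "k < m" "y = oth Q ((fstep Q ^^ k) x0)"
      unfolding C_def wk_set by blast
    then show "w \<in> C"
    proof cases
      case (1 k)
      have kP: "(fstep Q ^^ k) x0 \<in> PP" using fpow_PP x0_def x0PP by blast
      show ?thesis
      proof (cases "w = oth Q y")
        case True then show ?thesis using 1 unfolding C_def wk_set by blast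
      next
        case False
        then have w: "w = arcn y" using wy by blast
        show ?thesis
        proof (cases k)
          case 0
          obtain j where j: "m = Suc j" using m by (cases m) auto
          have "x0 = fstep Q ((fstep Q ^^ j) x0)" using m(1) j by simp
          then have "arcn x0 = oth Q ((fstep Q ^^ j) x0)"
            using arcn_inv oth_PP fpow_PP x0PP x0_def by (metis fstep_def)
          then show ?thesis using w 1 0 j unfolding C_def wk_set by auto
        next
          case (Suc j)
          have "y = arcn (oth Q ((fstep Q ^^ j) x0))" using 1 Suc by (simp add: fstep_def)
          then have "w = oth Q ((fstep Q ^^ j) x0)" using w arcn_inv oth_PP fpow_PP x0PP x0_def by metis
          then show ?thesis using 1 Suc unfolding C_def wk_set by auto
        qed
      qed
    next
      case (2 k)
      have kP: "(fstep Q ^^ k) x0 \<in> PP" using fpow_PP x0_def x0PP by blast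
      show ?thesis
      proof (cases "w = oth Q y")
        case True
        then have "w = (fstep Q ^^ k) x0" using 2 oth_inv kP by simp
        then show ?thesis using 2 unfolding C_def wk_set by blast
      next
        case False
        then have w: "w = (fstep Q ^^ Suc k) x0" using wy 2 by (simp add: fstep_def)
        show ?thesis
        proof (cases "Suc k = m")
          case True then show ?thesis using w m x0C by simp
        next
          case False
          then have "Suc k < m" using 2 by simp
          then show ?thesis unfolding C_def wk_set using w by blast
        qed
      qed
    qed
  qed
  have reach: "(x0,y) \<in> (RR Q)\<^sup>* \<Longrightarrow> y \<in> C" for y
    by (induction rule: rtrancl_induct) (use x0C closed in auto)
  have "card C \<le> 2 * m" unfolding C_def using card_length wk_len by metis
  then have "card C < card PP" using m card_PP by simp
  then obtain p where "p \<in> PP" "p \<notin> C" by (metis card_mono finite_set C_def not_le subsetI)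
  then have "\<not> (\<forall>y\<in>PP. (x0,y) \<in> (RR Q)\<^sup>*)" using reach by blast
  then show ?thesis unfolding num_eq using card_one_iff x0PP x0_def by simp
qed

lemma test1: "num_boundary_components 14 G_loop G_ori {0,3} = 1"
  by (rule qt_yes) (simp add: fstep_def oth_def arcn_def G_loop_def G_ori_def partner_def wk_num)
lemma test2: "num_boundary_components 14 G_loop G_ori {0,1} \<noteq> 1"
  by (rule qt_no) (simp add: fstep_def oth_def arcn_def G_loop_def G_ori_def partner_def wk_num orb_num)



lemma sum_Pow_insert:
  assumes "finite A" "a \<notin> A"
  shows "(\<Sum>Q\<in>Pow (insert a A). g Q) = (\<Sum>Q\<in>Pow A. g Q) + (\<Sum>Q\<in>Pow A. g (insert a Q))"
proof -
  have "(\<Sum>Q\<in>Pow (insert a A). g Q) = (\<Sum>Q\<in>Pow A. g Q) + (\<Sum>Q\<in>insert a ` Pow A. g Q)"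
    unfolding Pow_insert using assms by (intro sum.union_disjoint) auto
  moreover have "inj_on (insert a) (Pow A)"
  proof (rule inj_onI)
    fix x y assume xy: "x \<in> Pow A" "y \<in> Pow A" "insert a x = insert a y"
    then have "a \<notin> x" "a \<notin> y" using assms by auto
    then show "x = y" using xy(3) by (metis Diff_insert_absorb)
  qed
  ultimately show ?thesis by (simp add: sum.reindex)
qed

lemma loops_G: "loops_of G_N G_loop = {0,1,2,3,4,5,6}"
proof -
  have "{..<(14::nat)} = {0,1,2,3,4,5,6,7,8,9,10,11,12,13}" using enum14 by auto
  then show ?thesis unfolding loops_of_def G_N_def by (simp add: G_loop_def insert_commute)
qed

lemma num_yes: "distinct (wk Q (0,False) 14) \<Longrightarrow> (num_boundary_components 14 G_loop G_ori Q = 1) = True"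
  using qt_yes by simp
lemma num_no: "(0,False) \<in> set (orb Q (fstep Q (0,False)) 13) \<Longrightarrow> (num_boundary_components 14 G_loop G_ori Q = 1) = False"
  using qt_no by simp

lemma num_yes': "distinct (wk Q (0,False) 14) \<Longrightarrow> (num_boundary_components 14 G_loop G_ori Q = Suc 0) = True"
  using qt_yes by simp
lemma num_no': "(0,False) \<in> set (orb Q (fstep Q (0,False)) 13) \<Longrightarrow> (num_boundary_components 14 G_loop G_ori Q = Suc 0) = False"
  using qt_no by simp

lemma qtree_poly_eq: "qtree_poly G_N G_loop G_ori z = D7 z"
proof -
  have qs: "{Q. is_quasi_tree G_N G_loop G_ori Q} = {Q \<in> Pow {0,1,2,3,4,5,6}. num_boundary_components 14 G_loop G_ori Q = 1}"
    unfolding is_quasi_tree_def loops_G by (auto simp: G_N_def)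
  have "qtree_poly G_N G_loop G_ori z = (\<Sum>Q\<in>Pow {0,1,2,3,4,5,6}. if num_boundary_components 14 G_loop G_ori Q = 1 then \<Prod>e\<in>Q. z e else 0)"
    unfolding qtree_poly_def qs by (rule sum.inter_filter) simp
  also have "\<dots> = D7 z"
    apply (simp add: sum_Pow_insert Pow_empty del: Pow_insert)
    apply (simp add: num_yes num_no num_yes' num_no' fstep_def oth_def arcn_def G_loop_def G_ori_def partner_def wk_num orb_num)
    by (simp add: D7_def ac_simps)
  finally show ?thesis .
qed
lemma aux: "(c1::nat) \<le> c2 \<Longrightarrow> c2 < 14 \<Longrightarrow>
  (c1 < 0 \<and> 0 \<le> c2) = (c1 < 3 \<and> 3 \<le> c2) \<Longrightarrow>
  (c1 < 4 \<and> 4 \<le> c2) = (c1 < 7 \<and> 7 \<le> c2) \<Longrightarrow>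
  (c1 < 8 \<and> 8 \<le> c2) = (c1 < 11 \<and> 11 \<le> c2) \<Longrightarrow>
  (c1 < 10 \<and> 10 \<le> c2) = (c1 < 13 \<and> 13 \<le> c2) \<Longrightarrow>
  (c1 < 1 \<and> 1 \<le> c2) \<noteq> (c1 < 6 \<and> 6 \<le> c2) \<Longrightarrow>
  (c1 < 2 \<and> 2 \<le> c2) \<noteq> (c1 < 9 \<and> 9 \<le> c2) \<Longrightarrow>
  (c1 < 5 \<and> 5 \<le> c2) \<noteq> (c1 < 12 \<and> 12 \<le> c2) \<Longrightarrow> False"
  apply (subgoal_tac "c1 < 14")
   apply (drule enum14[of c1])
   apply (drule enum14[of c2])
   apply (elim disjE)
  apply simp_all
  done

lemma not_po: "\<not> pseudo_orientable G_N G_loop G_ori"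
proof
  assume "pseudo_orientable G_N G_loop G_ori"
  then obtain c1 c2 where c: "c1 \<le> c2" "c2 < 14" and
    H: "\<And>i j. i<14 \<Longrightarrow> j<14 \<Longrightarrow> i \<noteq> j \<and> G_loop i = G_loop j \<Longrightarrow>
           (G_ori (G_loop i) \<longleftrightarrow> ((c1 < i \<and> i \<le> c2) \<longleftrightarrow> (c1 < j \<and> j \<le> c2)))"
    unfolding pseudo_orientable_def G_N_def by blast
  have f1: "(c1 < 0 \<and> 0 \<le> c2) = (c1 < 3 \<and> 3 \<le> c2)" using H[of 0 3] by (simp add: G_loop_def G_ori_def)
  have f2: "(c1 < 4 \<and> 4 \<le> c2) = (c1 < 7 \<and> 7 \<le> c2)" using H[of 4 7] by (simp add: G_loop_def G_ori_def)
  have f3: "(c1 < 8 \<and> 8 \<le> c2) = (c1 < 11 \<and> 11 \<le> c2)" using H[of 8 11] by (simp add: G_loop_def G_ori_def)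
  have f4: "(c1 < 10 \<and> 10 \<le> c2) = (c1 < 13 \<and> 13 \<le> c2)" using H[of 10 13] by (simp add: G_loop_def G_ori_def)
  have f5: "(c1 < 1 \<and> 1 \<le> c2) \<noteq> (c1 < 6 \<and> 6 \<le> c2)" using H[of 1 6] by (simp add: G_loop_def G_ori_def)
  have f6: "(c1 < 2 \<and> 2 \<le> c2) \<noteq> (c1 < 9 \<and> 9 \<le> c2)" using H[of 2 9] by (simp add: G_loop_def G_ori_def)
  have f7: "(c1 < 5 \<and> 5 \<le> c2) \<noteq> (c1 < 12 \<and> 12 \<le> c2)" using H[of 5 12] by (simp add: G_loop_def G_ori_def)
  show False by (rule aux[OF c f1 f2 f3 f4 f5 f6 f7])
qed

theorem proposition5p9:
  shows "\<not> pseudo_orientable G_N G_loop G_ori \<and>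
         hurwitz_stable (loops_of G_N G_loop) (qtree_poly G_N G_loop G_ori)"
proof
  show "\<not> pseudo_orientable G_N G_loop G_ori" by (rule not_po)
  show "hurwitz_stable (loops_of G_N G_loop) (qtree_poly G_N G_loop G_ori)"
    unfolding hurwitz_stable_def
  proof (intro allI impI)
    fix z :: "nat \<Rightarrow> complex"
    assume a: "\<forall>e\<in>loops_of G_N G_loop. 0 < Re (z e)"
    have "\<forall>i<7. 0 < Re (z i)"
    proof (intro allI impI)
      fix i :: nat assume "i < 7"
      then have "i \<in> loops_of G_N G_loop" unfolding loops_G by auto
      then show "0 < Re (z i)" using a by blast
    qed
    then show "qtree_poly G_N G_loop G_ori z \<noteq> 0" using D7_nz qtree_poly_eq by simp
  qed
qed

end
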